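(* Let $d\ge 2$, $\underline E\subset\mathbb F_q^{d-1}$, $A\subset\mathbb F_q$, and $E=\underline E\times A\subset\mathbb F_q^{d-1}\times\mathbb F_q=\mathbb F_q^d$. Then $$\mathfrak M(E)\leq 2q^{-d-1}|A|^2|\underline E|.$$
   Context: $\mathbb F_q$ is a finite field of characteristic greater than two, and $\chi$ is a fixed nontrivial additive character of $\mathbb F_q$. For $f:\mathbb F_q^d\to\mathbb C$, $\widehat f(m)=q^{-d}\sum_{x\in\mathbb F_q^d}\chi(-m\cdot x)f(x)$; sets are identified with their indicator functions. For $m\in\mathbb F_q^d$, $\|m\|=m_1^2+\dots+m_d^2$; $S_r=\{x\in\mathbb F_q^d:\|x\|=r\}$. $\mathfrak M(E)=\max_{r\in\mathbb F_q}\sum_{m\in S_r}|\widehat E(m)|^2$. *)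

theory Defs
  imports "HOL-Analysis.Analysis"
begin

text \<open>F_q is a finite field type 'a. F_q^d is represented as F_q^(d-1) x F_q, i.e. the
  type ('a^'n) \<times> 'a with d - 1 = CARD('n) (so d = CARD('n) + 1 \<ge> 2).\<close>

definition add_char :: "('a::{finite,field} \<Rightarrow> complex) \<Rightarrow> bool" where
  "add_char ch \<longleftrightarrow> (\<forall>x y. ch (x + y) = ch x * ch y) \<and> (\<forall>x. norm (ch x) = 1)"

definition nontrivial_add_char :: "('a::{finite,field} \<Rightarrow> complex) \<Rightarrow> bool" where
  "nontrivial_add_char ch \<longleftrightarrow> add_char ch \<and> (\<exists>x. ch x \<noteq> 1)"

definition dotp :: "(('a::{finite,field})^'n) \<times> 'a \<Rightarrow> ('a^'n) \<times> 'a \<Rightarrow> 'a" where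
  "dotp m x = (\<Sum>i\<in>UNIV. fst m $ i * fst x $ i) + snd m * snd x"

definition qnorm :: "(('a::{finite,field})^'n) \<times> 'a \<Rightarrow> 'a" where
  "qnorm m = (\<Sum>i\<in>UNIV. (fst m $ i)^2) + (snd m)^2"

definition qsphere :: "'a \<Rightarrow> ((('a::{finite,field})^'n) \<times> 'a) set" where
  "qsphere r = {x. qnorm x = r}"

definition fourier :: "('a::{finite,field} \<Rightarrow> complex) \<Rightarrow> (('a^'n) \<times> 'a) set \<Rightarrow> ('a^'n) \<times> 'a \<Rightarrow> complex" where
  "fourier ch E m = (1 / of_nat CARD('a) ^ (CARD('n) + 1)) *
      (\<Sum>x\<in>UNIV. ch (- dotp m x) * indicator E x)"

definition MM :: "('a::{finite,field} \<Rightarrow> complex) \<Rightarrow> (('a^'n) \<times> 'a) set \<Rightarrow> real" where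
  "MM ch E = Max ((\<lambda>r. \<Sum>m\<in>qsphere r. (cmod (fourier ch E m))^2) ` (UNIV :: 'a set))"

end

theory Submission
  imports Defs
begin

definition dv :: "('a::field)^'n \<Rightarrow> 'a^'n \<Rightarrow> 'a" where
  "dv m x = (\<Sum>i\<in>UNIV. m $ i * x $ i)"

lemma ch0:
  assumes "add_char ch" shows "ch 0 = 1"
proof -
  have "ch 0 = ch 0 * ch 0" using assms unfolding add_char_def by (metis add_0)
  moreover have "ch 0 \<noteq> 0" using assms unfolding add_char_def by (metis norm_zero zero_neq_one)
  ultimately show ?thesis by (metis mult_cancel_left1)
qed

lemma ch_neg:
  assumes "add_char ch" shows "ch (- x) = cnj (ch x)"
proof -
  have n: "norm (ch x) = 1" using assms unfolding add_char_def by auto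
  have "ch x * ch (-x) = 1" using assms ch0[OF assms] unfolding add_char_def by (metis add.right_inverse)
  moreover have "ch x * cnj (ch x) = 1" using complex_norm_square[of "ch x"] n by simp
  ultimately show ?thesis by (metis mult.commute mult.left_neutral mult.assoc)
qed

lemma dv_add: "dv (m + w) z = dv m z + dv w z"
  unfolding dv_def by (simp add: distrib_right sum.distrib)

lemma dv_diff: "dv m (y - x) = dv m y - dv m x"
  unfolding dv_def by (simp add: right_diff_distrib sum_subtractf)

lemma dv_zero: "dv m 0 = 0"
  unfolding dv_def by simp

lemma orth:
  fixes z :: "('a::{finite,field})^'n::finite"
  assumes ac: "add_char ch" and x0: "ch x0 \<noteq> 1" and z: "z \<noteq> 0"
  shows "(\<Sum>m\<in>UNIV. ch (dv m z)) = 0"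
proof -
  obtain i where i: "z $ i \<noteq> 0" using z by (metis vec_eq_iff zero_index)
  define w :: "'a^'n" where "w = (\<chi> j. if j = i then x0 / z $ i else 0)"
  have wz: "dv w z = x0"
  proof -
    have "dv w z = (\<Sum>j\<in>UNIV. if j = i then x0 / z $ i * z $ j else 0)"
      unfolding dv_def w_def by (intro sum.cong) auto
    also have "\<dots> = x0" using i by simp
    finally show ?thesis .
  qed
  have "(\<Sum>m\<in>UNIV. ch (dv m z)) = (\<Sum>m\<in>UNIV. ch (dv (m + w) z))"
    by (rule sum.reindex_bij_witness[where j="\<lambda>m. m - w" and i="\<lambda>m. m + w"]) auto
  also have "\<dots> = ch x0 * (\<Sum>m\<in>UNIV. ch (dv m z))"
    using ac unfolding add_char_def by (simp add: dv_add wz sum_distrib_left mult.commute)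
  finally have "(1 - ch x0) * (\<Sum>m\<in>UNIV. ch (dv m z)) = 0" by (simp add: algebra_simps)
  thus ?thesis using x0 by simp
qed

lemma planch:
  fixes Eu :: "(('a::{finite,field})^'n::finite) set"
  assumes ac: "add_char ch" and x0: "ch x0 \<noteq> 1"
  shows "(\<Sum>m\<in>UNIV. (cmod (\<Sum>x\<in>Eu. ch (- dv m x)))^2) = real CARD('a) ^ CARD('n) * real (card Eu)"
proof -
  have "complex_of_real (\<Sum>m\<in>UNIV. (cmod (\<Sum>x\<in>Eu. ch (- dv m x)))^2)
      = (\<Sum>m\<in>UNIV. (\<Sum>x\<in>Eu. ch (- dv m x)) * cnj (\<Sum>x\<in>Eu. ch (- dv m x)))"
    by (simp only: of_real_sum complex_norm_square)
  also have "\<dots> = (\<Sum>m\<in>UNIV. \<Sum>x\<in>Eu. \<Sum>y\<in>Eu. ch (dv m (y - x)))"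
  proof (rule sum.cong[OF refl])
    fix m
    have "(\<Sum>x\<in>Eu. ch (- dv m x)) * cnj (\<Sum>x\<in>Eu. ch (- dv m x))
        = (\<Sum>x\<in>Eu. \<Sum>y\<in>Eu. ch (- dv m x) * cnj (ch (- dv m y)))"
      by (simp add: sum_product)
    also have "\<dots> = (\<Sum>x\<in>Eu. \<Sum>y\<in>Eu. ch (dv m (y - x)))"
    proof (intro sum.cong refl)
      fix x y
      have "cnj (ch (- dv m y)) = ch (dv m y)" using ch_neg[OF ac, of "dv m y"] by simp
      moreover have "ch (dv m (y - x)) = ch (dv m y) * ch (- dv m x)"
        using ac unfolding add_char_def by (metis dv_diff diff_conv_add_uminus)
      ultimately show "ch (- dv m x) * cnj (ch (- dv m y)) = ch (dv m (y - x))" by simp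
    qed
    finally show "(\<Sum>x\<in>Eu. ch (- dv m x)) * cnj (\<Sum>x\<in>Eu. ch (- dv m x))
        = (\<Sum>x\<in>Eu. \<Sum>y\<in>Eu. ch (dv m (y - x)))" .
  qed
  also have "\<dots> = (\<Sum>x\<in>Eu. \<Sum>y\<in>Eu. \<Sum>m\<in>UNIV. ch (dv m (y - x)))"
    by (subst sum.swap) (simp add: sum.swap[of _ UNIV])
  also have "\<dots> = (\<Sum>x\<in>Eu. \<Sum>y\<in>Eu. if y = x then of_nat (CARD('a) ^ CARD('n)) else 0)"
  proof (intro sum.cong refl)
    fix x y :: "'a^'n"
    show "(\<Sum>m\<in>UNIV. ch (dv m (y - x))) = (if y = x then of_nat (CARD('a) ^ CARD('n)) else 0)"
      using orth[OF ac x0, of "y - x"] by (simp add: dv_zero ch0[OF ac])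
  qed
  also have "\<dots> = of_nat (CARD('a) ^ CARD('n)) * of_nat (card Eu)"
    by simp
  also have "\<dots> = complex_of_real (real CARD('a) ^ CARD('n) * real (card Eu))" by simp
  finally show ?thesis by (simp only: of_real_eq_iff)
qed

lemma fourier_prod:
  fixes Eu :: "(('a::{finite,field})^'n::finite) set" and A :: "'a set"
  assumes ac: "add_char ch"
  shows "fourier ch (Eu \<times> A) (m', t) = (1 / of_nat CARD('a) ^ (CARD('n) + 1)) *
     ((\<Sum>x\<in>Eu. ch (- dv m' x)) * (\<Sum>a\<in>A. ch (- (t * a))))"
proof -
  have "(\<Sum>x\<in>UNIV. ch (- dotp (m', t) x) * indicator (Eu \<times> A) x)
      = (\<Sum>x\<in>Eu \<times> A. ch (- dotp (m', t) x))"
    by (rule sum.mono_neutral_cong_right) (auto simp: indicator_def)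
  also have "\<dots> = (\<Sum>x\<in>Eu. \<Sum>a\<in>A. ch (- dotp (m', t) (x, a)))"
    by (simp add: sum.cartesian_product)
  also have "\<dots> = (\<Sum>x\<in>Eu. \<Sum>a\<in>A. ch (- dv m' x) * ch (- (t * a)))"
  proof (intro sum.cong refl)
    fix x a
    show "ch (- dotp (m', t) (x, a)) = ch (- dv m' x) * ch (- (t * a))"
    proof -
      have "- dotp (m', t) (x, a) = - dv m' x + - (t * a)" by (simp add: dotp_def dv_def)
      thus ?thesis using ac unfolding add_char_def by (simp only:)
    qed
  qed
  also have "\<dots> = (\<Sum>x\<in>Eu. ch (- dv m' x)) * (\<Sum>a\<in>A. ch (- (t * a)))"
    by (simp add: sum_product)
  finally show ?thesis unfolding fourier_def by simp
qed

lemma sphere_eq: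
  "qsphere r = Sigma (UNIV :: (('a::{finite,field})^'n::finite) set)
     (\<lambda>m. {t. t^2 = r - (\<Sum>i\<in>UNIV. (m $ i)^2)})"
  unfolding qsphere_def qnorm_def by (auto simp: algebra_simps)

lemma sq_card: "card {t::'a::{finite,field}. t^2 = c} \<le> 2"
proof (cases "\<exists>s. s^2 = c")
  case True
  then obtain s where s: "s^2 = c" by blast
  have "{t. t^2 = c} \<subseteq> {s, -s}"
  proof
    fix t assume "t \<in> {t. t^2 = c}"
    hence "t^2 = s^2" using s by simp
    hence "t = s \<or> t = -s" by (simp add: power2_eq_iff)
    thus "t \<in> {s, -s}" by simp
  qed
  hence "card {t. t^2 = c} \<le> card {s, -s}" by (simp add: card_mono)
  also have "\<dots> \<le> 2" by (simp add: card_insert_le_m1)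
  finally show ?thesis .
next
  case False
  hence "{t. t^2 = c} = {}" by auto
  thus ?thesis by simp
qed

lemma T_bound:
  fixes A :: "'a::{finite,field} set"
  assumes ac: "add_char ch"
  shows "(cmod (\<Sum>a\<in>A. ch (- (t * a))))^2 \<le> real (card A)^2"
proof -
  have "cmod (\<Sum>a\<in>A. ch (- (t * a))) \<le> (\<Sum>a\<in>A. cmod (ch (- (t * a))))" by (rule norm_sum)
  also have "\<dots> = real (card A)" using ac unfolding add_char_def by simp
  finally show ?thesis by (simp add: power_mono)
qed

theorem mainTheorem12:
  fixes ch :: "'a::{finite,field} \<Rightarrow> complex"
    and Eu :: "('a^'n) set" and A :: "'a set"
  assumes "CHAR('a) > 2"
    and "nontrivial_add_char ch"
  shows "MM ch (Eu \<times> A) \<le>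
    2 * real CARD('a) powi (- int (CARD('n) + 1) - 1) * real (card A)^2 * real (card Eu)"
proof -
  have ac: "add_char ch" and "\<exists>x. ch x \<noteq> 1" using assms(2) unfolding nontrivial_add_char_def by auto
  then obtain x0 where x0: "ch x0 \<noteq> 1" by blast
  define q where "q = real CARD('a)"
  define n where "n = CARD('n)"
  have qpos: "q > 0" unfolding q_def by simp
  define c where "c = 1 / q ^ (n + 1)"
  define g where "g = (\<lambda>m'::'a^'n. (cmod (\<Sum>x\<in>Eu. ch (- dv m' x)))^2)"
  define h where "h = (\<lambda>t::'a. (cmod (\<Sum>a\<in>A. ch (- (t * a))))^2)"
  have g0: "g m \<ge> 0" for m unfolding g_def by simp
  have fm: "(cmod (fourier ch (Eu \<times> A) m))^2 = c^2 * g (fst m) * h (snd m)" for m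
  proof -
    obtain m' t where m: "m = (m', t)" by fastforce
    show ?thesis unfolding m fourier_prod[OF ac] c_def g_def h_def q_def n_def
      by (simp add: norm_mult norm_divide norm_power power_mult_distrib power_divide)
  qed
  have bound: "(\<Sum>m\<in>qsphere r. (cmod (fourier ch (Eu \<times> A) m))^2)
      \<le> 2 * q powi (- int (CARD('n) + 1) - 1) * real (card A)^2 * real (card Eu)" for r
  proof -
    define B where "B = (\<lambda>m::'a^'n. {t. t^2 = r - (\<Sum>i\<in>UNIV. (m $ i)^2)})"
    have "(\<Sum>m\<in>qsphere r. (cmod (fourier ch (Eu \<times> A) m))^2)
        = (\<Sum>m\<in>Sigma UNIV B. c^2 * g (fst m) * h (snd m))"
      unfolding sphere_eq B_def fm ..
    also have "\<dots> = (\<Sum>m'\<in>UNIV. \<Sum>t\<in>B m'. c^2 * g m' * h t)"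
      by (subst sum.Sigma) (auto simp: case_prod_beta)
    also have "\<dots> \<le> (\<Sum>m'\<in>UNIV. c^2 * g m' * (2 * real (card A)^2))"
    proof (rule sum_mono)
      fix m'
      have "(\<Sum>t\<in>B m'. h t) \<le> real (card (B m')) * real (card A)^2"
        using sum_bounded_above[of "B m'" h "real (card A)^2"] T_bound[OF ac] unfolding h_def by blast
      also have "\<dots> \<le> 2 * real (card A)^2"
        using sq_card[of "r - (\<Sum>i\<in>UNIV. (m' $ i)^2)"] unfolding B_def
        by (intro mult_right_mono) auto
      finally have "(\<Sum>t\<in>B m'. h t) \<le> 2 * real (card A)^2" .
      hence "c^2 * g m' * (\<Sum>t\<in>B m'. h t) \<le> c^2 * g m' * (2 * real (card A)^2)"
        using g0[of m'] by (intro mult_left_mono) auto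
      thus "(\<Sum>t\<in>B m'. c^2 * g m' * h t) \<le> c^2 * g m' * (2 * real (card A)^2)"
        by (simp add: sum_distrib_left)
    qed
    also have "\<dots> = c^2 * (2 * real (card A)^2) * (\<Sum>m'\<in>UNIV. g m')"
      by (simp add: sum_distrib_left sum_distrib_right algebra_simps)
    also have "\<dots> = c^2 * (2 * real (card A)^2) * (q ^ n * real (card Eu))"
      unfolding g_def planch[OF ac x0] q_def n_def ..
    also have "\<dots> = 2 * q powi (- int (CARD('n) + 1) - 1) * real (card A)^2 * real (card Eu)"
    proof -
      have e: "- int (CARD('n) + 1) - 1 = - int (n + 2)" unfolding n_def by simp
      have X: "q powi (- int (n + 2)) = 1 / q ^ (n + 2)"
        unfolding power_int_minus power_int_of_nat by (simp add: divide_inverse)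
      have Y: "c^2 * q ^ n = 1 / q ^ (n + 2)"
        unfolding c_def using qpos by (simp add: field_simps power_add power2_eq_square mult_2_right power_mult)
      have "c^2 * (2 * real (card A)^2) * (q ^ n * real (card Eu))
          = 2 * (c^2 * q ^ n) * real (card A)^2 * real (card Eu)" by (simp add: algebra_simps)
      thus ?thesis unfolding e Y X[symmetric] .
    qed
    finally show ?thesis .
  qed
  show ?thesis unfolding MM_def q_def[symmetric]
    using bound by (subst Max_le_iff) auto
qed

end
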